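(* Let $\Omega_0,\Omega_1\subset\mathbb{R}^d$ be bounded Lipschitz domains with nonempty interior, $\Sigma_0,\Sigma_1$ symmetric positive definite $d\times d$ matrices and $m_0,m_1\in\mathbb{R}^d$. Define the truncated Gaussians $$d\mu(x)=\frac1{Z_0}\exp\Big(-\tfrac12(x-m_0)^\top\Sigma_0^{-1}(x-m_0)\Big)\mathbf 1_{\Omega_0}(x)dx,\quad d\nu(y)=\frac1{Z_1}\exp\Big(-\tfrac12(y-m_1)^\top\Sigma_1^{-1}(y-m_1)\Big)\mathbf 1_{\Omega_1}(y)dy,$$ with normalizing constants $Z_0,Z_1>0$, and consider the cost $c(x,y)=\frac12\|x-y\|^2$. If the (unregularized) Monge map transporting $\mu$ to $\nu$ is affine, $T(x)=Ax+a$ with $A=A^\top\succ0$ and $a\in\mathbb{R}^d$, then necessarily $$\Omega_1=A\Omega_0+a\ \text{(up to Lebesgue-null sets)},\qquad m_1=Am_0+a,\qquad \Sigma_1=A\Sigma_0A.$$ Conversely, if these three conditions hold for some $A=A^\top\succ0$ and $a\in\mathbb{R}^d$, then $T(x)=Ax+a$ satisfies $T_\#\mu=\nu$ and is the Monge map.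
   Context: The Monge map is the optimal transport map for the quadratic cost, i.e. the map $T=\nabla\varphi$ with $\varphi$ convex and $T_\#\mu=\nu$ (Brenier map). *)

theory Defs
  imports "HOL-Probability.Probability"
begin

definition sym_posdef :: "real^'n^'n \<Rightarrow> bool" where
  "sym_posdef M \<longleftrightarrow> transpose M = M \<and> (\<forall>x. x \<noteq> 0 \<longrightarrow> x \<bullet> (M *v x) > 0)"

text \<open>Lipschitz domain: nonempty open connected set whose boundary is locally the graph of a
  Lipschitz function.\<close>
definition lipschitz_domain :: "(real^'n) set \<Rightarrow> bool" where
  "lipschitz_domain \<Omega> \<longleftrightarrow> open \<Omega> \<and> connected \<Omega> \<and> \<Omega> \<noteq> {} \<and>
     (\<forall>p \<in> frontier \<Omega>. \<exists>r>0. \<exists>e g L. norm e = 1 \<and> L-lipschitz_on UNIV g \<and>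
        \<Omega> \<inter> ball p r =
          {x \<in> ball p r. (x - p) \<bullet> e > g ((x - p) - ((x - p) \<bullet> e) *\<^sub>R e)})"

definition gauss_weight :: "real^'n \<Rightarrow> real^'n^'n \<Rightarrow> real^'n \<Rightarrow> real" where
  "gauss_weight m \<Sigma> x = exp (- (1/2) * ((x - m) \<bullet> (matrix_inv \<Sigma> *v (x - m))))"

definition gauss_const :: "(real^'n) set \<Rightarrow> real^'n \<Rightarrow> real^'n^'n \<Rightarrow> real" where
  "gauss_const \<Omega> m \<Sigma> = integral \<Omega> (gauss_weight m \<Sigma>)"

definition trunc_gauss :: "(real^'n) set \<Rightarrow> real^'n \<Rightarrow> real^'n^'n \<Rightarrow> (real^'n) measure" where
  "trunc_gauss \<Omega> m \<Sigma> = density lborel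
     (\<lambda>x. ennreal (indicator \<Omega> x * gauss_weight m \<Sigma> x / gauss_const \<Omega> m \<Sigma>))"

text \<open>Monge (Brenier) map for the quadratic cost: T pushes \<mu> to \<nu> and T = \<nabla>\<phi>
  \<mu>-a.e. for a convex \<phi>.\<close>
definition monge_map :: "(real^'n) measure \<Rightarrow> (real^'n) measure \<Rightarrow> (real^'n \<Rightarrow> real^'n) \<Rightarrow> bool" where
  "monge_map \<mu> \<nu> T \<longleftrightarrow> T \<in> borel_measurable \<mu> \<and> distr \<mu> lborel T = \<nu> \<and>
     (\<exists>\<phi>::real^'n \<Rightarrow> real. convex_on UNIV \<phi> \<and>
        (AE x in \<mu>. (\<phi> has_derivative (\<lambda>h. T x \<bullet> h)) (at x)))"

end

theory Submission imports Defs "HOL-Analysis.Analysis" begin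

lemma invertible_matrix_inv:
  fixes A :: "real^'n^'n"
  assumes "invertible A"
  shows "A ** matrix_inv A = mat 1" "matrix_inv A ** A = mat 1"
proof -
  from assms obtain B where "A ** B = mat 1 \<and> B ** A = mat 1" unfolding invertible_def by blast
  then have "A ** matrix_inv A = mat 1 \<and> matrix_inv A ** A = mat 1"
    unfolding matrix_inv_def by (rule someI)
  then show "A ** matrix_inv A = mat 1" "matrix_inv A ** A = mat 1" by auto
qed

lemma matrix_inv_unique:
  fixes A B :: "real^'n^'n"
  assumes "B ** A = mat 1"
  shows "matrix_inv A = B"
proof -
  have inv: "invertible A" using assms invertible_left_inverse by blast
  have "B = B ** (A ** matrix_inv A)" using invertible_matrix_inv(1)[OF inv] by simp
  also have "\<dots> = (B ** A) ** matrix_inv A" by (simp add: matrix_mul_assoc)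
  also have "\<dots> = matrix_inv A" using assms by simp
  finally show ?thesis by simp
qed

lemma sym_dot:
  fixes M :: "real^'n^'n"
  assumes "transpose M = M"
  shows "x \<bullet> (M *v y) = y \<bullet> (M *v x)"
proof -
  have "x \<bullet> (M *v y) = (x v* M) \<bullet> y" by (simp add: dot_lmul_matrix)
  also have "x v* M = transpose M *v x" by simp
  also have "\<dots> = M *v x" using assms by simp
  finally show ?thesis by (simp add: inner_commute)
qed

lemma posdef_invertible:
  fixes M :: "real^'n^'n"
  assumes "sym_posdef M"
  shows "invertible M"
proof -
  have "inj ((*v) M)"
  proof (rule injI)
    fix x y assume "M *v x = M *v y"
    then have "M *v (x - y) = 0" by (simp add: matrix_vector_mult_diff_distrib)
    then show "x = y" using assms unfolding sym_posdef_def by (metis inner_zero_right less_irrefl right_minus_eq)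
  qed
  then show ?thesis using matrix_left_invertible_injective invertible_left_inverse by blast
qed

lemma transpose_matrix_inv_sym:
  fixes M :: "real^'n^'n"
  assumes "transpose M = M" "invertible M"
  shows "transpose (matrix_inv M) = matrix_inv M"
proof -
  have "transpose (matrix_inv M) ** M = transpose (matrix_inv M) ** transpose M" using assms by simp
  also have "\<dots> = transpose (M ** matrix_inv M)" by (simp add: matrix_transpose_mul)
  also have "\<dots> = mat 1" using invertible_matrix_inv(1)[OF assms(2)] by simp
  finally show ?thesis using matrix_inv_unique by metis
qed

lemma matrix_inv_sandwich:
  fixes A S :: "real^'n^'n"
  assumes "invertible A" "invertible S"
  shows "matrix_inv (A ** S ** A) = matrix_inv A ** matrix_inv S ** matrix_inv A"
proof (rule matrix_inv_unique)
  let ?Ai = "matrix_inv A" and ?Si = "matrix_inv S"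
  have "?Ai ** ?Si ** ?Ai ** (A ** S ** A) = ?Ai ** ?Si ** (?Ai ** A) ** S ** A"
    by (simp add: matrix_mul_assoc)
  also have "\<dots> = ?Ai ** (?Si ** S) ** A"
    using invertible_matrix_inv[OF assms(1)] by (simp add: matrix_mul_assoc)
  also have "\<dots> = ?Ai ** A"
    using invertible_matrix_inv[OF assms(2)] by simp
  also have "\<dots> = mat 1" using invertible_matrix_inv[OF assms(1)] by simp
  finally show "?Ai ** ?Si ** ?Ai ** (A ** S ** A) = mat 1" .
qed

lemma gauss_weight_affine:
  fixes A S :: "real^'n^'n"
  assumes "invertible A" "transpose A = A" "invertible S"
  shows "gauss_weight m S (matrix_inv A *v (y - a)) = gauss_weight (A *v m + a) (A ** S ** A) y"
proof -
  let ?Ai = "matrix_inv A" and ?Si = "matrix_inv S"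
  have i1: "?Ai *v (A *v x) = x" for x using invertible_matrix_inv[OF assms(1)] by (simp add: matrix_vector_mul_assoc)
  have symAi: "transpose ?Ai = ?Ai" using transpose_matrix_inv_sym assms by blast
  define u where "u = y - (A *v m + a)"
  have e1: "?Ai *v (y - a) - m = ?Ai *v u"
    unfolding u_def by (simp add: matrix_vector_mult_diff_distrib i1 algebra_simps)
  have "(?Ai *v u) \<bullet> (?Si *v (?Ai *v u)) = u \<bullet> (?Ai *v (?Si *v (?Ai *v u)))"
    using sym_dot[OF symAi, of u "?Si *v (?Ai *v u)"] by (simp add: inner_commute)
  also have "\<dots> = u \<bullet> ((?Ai ** ?Si ** ?Ai) *v u)" by (simp add: matrix_vector_mul_assoc matrix_mul_assoc)
  also have "\<dots> = u \<bullet> (matrix_inv (A ** S ** A) *v u)" using matrix_inv_sandwich assms by metis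
  finally show ?thesis unfolding gauss_weight_def e1 u_def by simp
qed

lemma quad_expand:
  fixes P :: "real^'n^'n"
  assumes "transpose P = P"
  shows "(u + t *\<^sub>R v) \<bullet> (P *v (u + t *\<^sub>R v)) = u \<bullet> (P *v u) + 2*t*(v \<bullet> (P *v u)) + t^2 * (v \<bullet> (P *v v))"
proof -
  have s: "u \<bullet> (P *v v) = v \<bullet> (P *v u)" using sym_dot[OF assms] .
  show ?thesis
    by (simp add: matrix_vector_right_distrib matrix_vector_mult_scaleR inner_add_left inner_add_right s power2_eq_square algebra_simps)
qed

lemma quad_ident:
  fixes P Q :: "real^'n^'n" and m n y0 :: "real^'n"
  assumes sP: "transpose P = P" and sQ: "transpose Q = Q" and r: "r > 0"
    and eq: "\<And>y. y \<in> ball y0 r \<Longrightarrow> (y - m) \<bullet> (P *v (y - m)) - (y - n) \<bullet> (Q *v (y - n)) = C"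
  shows "P = Q \<and> P *v (y0 - m) = Q *v (y0 - n)"
proof -
  define D where "D = P *v (y0 - m) - Q *v (y0 - n)"
  have key: "v \<bullet> D = 0 \<and> v \<bullet> ((P - Q) *v v) = 0" for v
  proof -
    define t where "t = r / (2 * (norm v + 1))"
    have "2 * (norm v + 1) > 0" by (simp add: add_nonneg_pos)
    then have tpos: "t > 0" using r by (simp add: t_def divide_pos_pos del: distrib_left_numeral)
    have tn: "t * norm v < r"
    proof -
      have "t * norm v = r * (norm v / (2 * (norm v + 1)))" by (simp add: t_def)
      also have "norm v / (2 * (norm v + 1)) < 1"
      proof (subst divide_less_eq_1, rule disjI1)
        show "0 < 2 * (norm v + 1) \<and> norm v < 2 * (norm v + 1)" by (smt (verit) norm_ge_zero)
      qed
      then have "r * (norm v / (2 * (norm v + 1))) < r * 1" using r by (intro mult_strict_left_mono) auto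
      finally show ?thesis by simp
    qed
    have inb: "y0 + s *\<^sub>R v \<in> ball y0 r" if "\<bar>s\<bar> = t" for s
      using tn that tpos by (simp add: dist_norm)
    have q: "(y0 + s *\<^sub>R v - m) \<bullet> (P *v (y0 + s *\<^sub>R v - m)) - (y0 + s *\<^sub>R v - n) \<bullet> (Q *v (y0 + s *\<^sub>R v - n))
         = ((y0 - m) \<bullet> (P *v (y0 - m)) - (y0 - n) \<bullet> (Q *v (y0 - n))) + 2 * s * (v \<bullet> D) + s^2 * (v \<bullet> ((P - Q) *v v))" for s
    proof -
      have a1: "y0 + s *\<^sub>R v - m = (y0 - m) + s *\<^sub>R v" "y0 + s *\<^sub>R v - n = (y0 - n) + s *\<^sub>R v" by (simp_all add: algebra_simps)
      show ?thesis unfolding a1 quad_expand[OF sP] quad_expand[OF sQ] D_def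
        by (simp add: inner_diff_right matrix_vector_mult_diff_rdistrib algebra_simps)
    qed
    have c0: "(y0 - m) \<bullet> (P *v (y0 - m)) - (y0 - n) \<bullet> (Q *v (y0 - n)) = C" using eq r by simp
    have p: "2*t*(v \<bullet> D) + t^2 * (v \<bullet> ((P - Q) *v v)) = 0"
      using q[of t] eq[OF inb[of t]] c0 tpos by simp
    have mneg: "2*(-t)*(v \<bullet> D) + (-t)^2 * (v \<bullet> ((P - Q) *v v)) = 0"
      using q[of "-t"] eq[OF inb[of "-t"]] c0 tpos by simp
    have "t^2 * (v \<bullet> ((P - Q) *v v)) = 0" using p mneg by simp
    then have e: "v \<bullet> ((P - Q) *v v) = 0" using tpos by simp
    then have "v \<bullet> D = 0" using p tpos by simp
    with e show ?thesis by simp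
  qed
  have D0: "D = 0" using key[of D] by simp
  have sB: "transpose (P - Q) = P - Q" using sP sQ by (simp add: transpose_def vec_eq_iff)
  have Bv: "(P - Q) *v v = 0" for v
  proof -
    let ?w = "(P - Q) *v v"
    have "(v + ?w) \<bullet> ((P - Q) *v (v + ?w)) = 0" using key by blast
    then have "v \<bullet> ((P - Q) *v v) + 2 * (?w \<bullet> ((P - Q) *v v)) + ?w \<bullet> ((P - Q) *v ?w) = 0"
      using quad_expand[OF sB, of v 1 ?w] by simp
    then have "?w \<bullet> ?w = 0" using key[of v] key[of ?w] by simp
    then show ?thesis by simp
  qed
  have "P = Q"
  proof -
    have "P *v v = Q *v v" for v using Bv[of v] by (simp add: matrix_vector_mult_diff_rdistrib)
    then show ?thesis by (simp add: matrix_eq)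
  qed
  then show ?thesis using D0 D_def by simp
qed


lemma posdef_inv_nonneg:
  fixes S :: "real^'n^'n"
  assumes "sym_posdef S"
  shows "x \<bullet> (matrix_inv S *v x) \<ge> 0"
proof -
  have inv: "invertible S" using posdef_invertible[OF assms] .
  define y where "y = matrix_inv S *v x"
  have x: "x = S *v y" unfolding y_def using invertible_matrix_inv(1)[OF inv] by (simp add: matrix_vector_mul_assoc)
  have "y \<bullet> (S *v y) \<ge> 0" using assms unfolding sym_posdef_def by (cases "y = 0") (auto intro: less_imp_le)
  have "x \<bullet> (matrix_inv S *v x) = x \<bullet> y" by (simp add: y_def)
  also have "\<dots> = (S *v y) \<bullet> y" by (subst x, rule refl)
  finally show ?thesis using \<open>y \<bullet> (S *v y) \<ge> 0\<close> by (simp add: inner_commute)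
qed

lemma continuous_on_mv: "continuous_on UNIV (\<lambda>x. (M::real^'n^'n) *v (x - m))"
proof -
  have cM: "continuous_on UNIV ((*v) M)"
    by (intro linear_continuous_on linear_conv_bounded_linear[THEN iffD1] matrix_vector_mul_linear)
  show ?thesis
    using continuous_on_compose2[OF cM continuous_on_diff[OF continuous_on_id continuous_on_const]] by auto
qed

lemma gauss_weight_continuous: "continuous_on UNIV (gauss_weight m S)"
  unfolding gauss_weight_def
  by (intro continuous_intros continuous_on_mv)

lemma gauss_weight_pos: "gauss_weight m S x > 0"
  unfolding gauss_weight_def by simp

lemma gauss_weight_le1:
  assumes "sym_posdef S"
  shows "gauss_weight m S x \<le> 1"
  unfolding gauss_weight_def using posdef_inv_nonneg[OF assms, of "x - m"] by simp

lemma open_nonempty_pos: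
  fixes U :: "'a::euclidean_space set"
  assumes "open U" "U \<noteq> {}"
  shows "emeasure lborel U > 0"
proof -
  obtain x where x: "x \<in> U" using assms by blast
  obtain e where e: "e > 0" "ball x e \<subseteq> U" using assms(1) x openE by blast
  obtain a b where ab: "x \<in> box a b" "box a b \<subseteq> ball x e" using rational_boxes[OF e(1)] by blast
  have "0 < emeasure lborel (box a b)"
    using ab(1) by (auto simp: emeasure_lborel_box_eq mem_box algebra_simps intro!: prod_pos)
  also have "\<dots> \<le> emeasure lborel U" using ab e assms(1) by (intro emeasure_mono) auto
  finally show ?thesis .
qed

lemma gauss_norm:
  fixes \<Omega> :: "(real^'n) set"
  assumes "open \<Omega>" "bounded \<Omega>" "\<Omega> \<noteq> {}" "sym_posdef S"
  shows "gauss_const \<Omega> m S > 0"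
    "(\<integral>\<^sup>+ x. ennreal (indicator \<Omega> x * gauss_weight m S x) \<partial>lborel) = ennreal (gauss_const \<Omega> m S)"
proof -
  let ?g = "gauss_weight m S"
  let ?h = "\<lambda>x. indicator \<Omega> x * ?g x"
  have gm: "?g \<in> borel_measurable borel"
    by (rule borel_measurable_continuous_onI[OF gauss_weight_continuous])
  have Om: "\<Omega> \<in> sets lborel" using assms(1) by simp
  have hm: "?h \<in> borel_measurable lborel"
    using gm Om by measurable
  have hint: "integrable lborel ?h"
  proof (rule integrableI_bounded_set[where A = \<Omega> and B = 1])
    show "emeasure lborel \<Omega> < \<infinity>" using emeasure_bounded_finite[OF assms(2)] .
    show "AE x in lborel. x \<in> \<Omega> \<longrightarrow> norm (?h x) \<le> 1"
    proof (rule AE_I2, rule impI)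
      fix x assume "x \<in> \<Omega>"
      then show "norm (?h x) \<le> 1" using gauss_weight_le1[OF assms(4), of m x] gauss_weight_pos[of m S x]
        by (simp add: indicator_def abs_of_pos)
    qed
    show "AE x in lborel. x \<notin> \<Omega> \<longrightarrow> ?h x = 0" by (auto intro!: AE_I2)
  qed (use Om hm in auto)
  have "(?h has_integral (integral\<^sup>L lborel ?h)) UNIV" by (rule has_integral_integral_lborel[OF hint])
  then have "integral UNIV ?h = integral\<^sup>L lborel ?h" by (rule integral_unique)
  moreover have "integral UNIV ?h = gauss_const \<Omega> m S"
  proof -
    have "?h = (\<lambda>x. if x \<in> \<Omega> then ?g x else 0)" by (auto simp: indicator_def fun_eq_iff)
    then show ?thesis unfolding gauss_const_def using integral_restrict_UNIV[of \<Omega> ?g] by simp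
  qed
  ultimately have Z: "gauss_const \<Omega> m S = integral\<^sup>L lborel ?h" by simp
  have nn: "AE x in lborel. 0 \<le> ?h x"
  proof (rule AE_I2)
    fix x show "0 \<le> ?h x" using gauss_weight_pos[of m S x] by (simp add: indicator_def)
  qed
  show "(\<integral>\<^sup>+ x. ennreal (?h x) \<partial>lborel) = ennreal (gauss_const \<Omega> m S)"
    unfolding Z by (rule nn_integral_eq_integral[OF hint nn])
  have Z0: "gauss_const \<Omega> m S \<ge> 0" unfolding Z using nn by (rule integral_nonneg_AE)
  show "gauss_const \<Omega> m S > 0"
  proof (rule ccontr)
    assume "\<not> gauss_const \<Omega> m S > 0"
    then have "integral\<^sup>L lborel ?h = 0" using Z Z0 by simp
    then have "AE x in lborel. ?h x = 0" using integral_nonneg_eq_0_iff_AE[OF hint nn] by simp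
    then obtain N where N0: "{x \<in> space lborel. \<not> ?h x = 0} \<subseteq> N" "emeasure lborel N = 0" "N \<in> sets lborel"
      by (rule AE_E)
    then have N: "{x \<in> space lborel. \<not> ?h x = 0} \<subseteq> N" "N \<in> null_sets lborel" by auto
    have "\<Omega> \<subseteq> N"
    proof
      fix x assume "x \<in> \<Omega>"
      then have "?h x \<noteq> 0" using gauss_weight_pos[of m S x] by simp
      then show "x \<in> N" using N(1) by auto
    qed
    then have "\<Omega> \<in> null_sets lborel" using N(2) Om by (rule null_sets_subset[rotated 2])
    then have "emeasure lborel \<Omega> = 0" by (rule null_setsD1)
    then show False using open_nonempty_pos[OF assms(1,3)] by simp
  qed
qed

lemma trunc_gauss_mass:
  fixes \<Omega> :: "(real^'n) set"
  assumes "open \<Omega>" "bounded \<Omega>" "\<Omega> \<noteq> {}" "sym_posdef S"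
  shows "emeasure (trunc_gauss \<Omega> m S) UNIV = 1"
proof -
  let ?Z = "gauss_const \<Omega> m S"
  have Z: "?Z > 0" using gauss_norm[OF assms] by simp
  have "emeasure (trunc_gauss \<Omega> m S) UNIV = (\<integral>\<^sup>+ x. ennreal (indicator \<Omega> x * gauss_weight m S x / ?Z) \<partial>lborel)"
  proof -
    have gm: "gauss_weight m S \<in> borel_measurable borel"
      by (rule borel_measurable_continuous_onI[OF gauss_weight_continuous])
    have Om: "\<Omega> \<in> sets lborel" using assms(1) by simp
    have "(\<lambda>x. ennreal (indicator \<Omega> x * gauss_weight m S x / ?Z)) \<in> borel_measurable lborel"
      using gm Om by measurable
    then show ?thesis unfolding trunc_gauss_def by (subst emeasure_density) auto
  qed
  also have "\<dots> = (\<integral>\<^sup>+ x. ennreal (indicator \<Omega> x * gauss_weight m S x) * ennreal (1 / ?Z) \<partial>lborel)"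
    using Z gauss_weight_pos[of m S] by (intro nn_integral_cong) (simp add: ennreal_mult[symmetric] less_imp_le)
  also have "\<dots> = ennreal ?Z * ennreal (1 / ?Z)"
  proof -
    have gm: "gauss_weight m S \<in> borel_measurable borel"
      by (rule borel_measurable_continuous_onI[OF gauss_weight_continuous])
    have Om: "\<Omega> \<in> sets lborel" using assms(1) by simp
    have "(\<lambda>x. ennreal (indicator \<Omega> x * gauss_weight m S x)) \<in> borel_measurable lborel"
      using gm Om by measurable
    then show ?thesis using gauss_norm(2)[OF assms] by (subst nn_integral_multc) auto
  qed
  also have "\<dots> = 1" using Z by (simp add: ennreal_mult[symmetric])
  finally show ?thesis .
qed

lemma quad_convex:
  fixes A :: "real^'n^'n" and a :: "real^'n"
  assumes "sym_posdef A"
  shows "convex_on UNIV (\<lambda>x. (1/2) * (x \<bullet> (A *v x)) + a \<bullet> x)"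
proof (rule convex_onI)
  fix t :: real and x y :: "real^'n"
  assume t: "t > 0" "t < 1"
  have sA: "transpose A = A" using assms unfolding sym_posdef_def by simp
  have s: "x \<bullet> (A *v y) = y \<bullet> (A *v x)" using sym_dot[OF sA] .
  have nn: "(x - y) \<bullet> (A *v (x - y)) \<ge> 0" using assms unfolding sym_posdef_def
    by (cases "x - y = 0") (auto intro: less_imp_le)
  define \<alpha> where "\<alpha> = x \<bullet> (A *v x)"
  define \<beta> where "\<beta> = y \<bullet> (A *v y)"
  define \<gamma> where "\<gamma> = y \<bullet> (A *v x)"
  define Q where "Q = (1-t)^2 * \<alpha> + 2 * t * (1 - t) * \<gamma> + t^2 * \<beta>"
  have e1: "(x - y) \<bullet> (A *v (x - y)) = \<alpha> - 2 * \<gamma> + \<beta>"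
    unfolding \<alpha>_def \<beta>_def \<gamma>_def by (simp add: matrix_vector_mult_diff_distrib inner_diff_left inner_diff_right s)
  have e2: "((1 - t) *\<^sub>R x + t *\<^sub>R y) \<bullet> (A *v ((1 - t) *\<^sub>R x + t *\<^sub>R y)) = Q"
    unfolding \<alpha>_def \<beta>_def \<gamma>_def Q_def
    by (simp add: matrix_vector_right_distrib matrix_vector_mult_scaleR inner_add_left inner_add_right s power2_eq_square algebra_simps)
  have e3: "a \<bullet> ((1 - t) *\<^sub>R x + t *\<^sub>R y) = (1 - t) * (a \<bullet> x) + t * (a \<bullet> y)"
    by (simp add: inner_add_right)
  have "Q = (1 - t) * \<alpha> + t * \<beta> - t * (1 - t) * (\<alpha> - 2 * \<gamma> + \<beta>)"
    unfolding Q_def by (simp add: power2_eq_square algebra_simps)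
  moreover have "t * (1 - t) * (\<alpha> - 2 * \<gamma> + \<beta>) \<ge> 0" using t nn e1 by simp
  ultimately have ineq: "Q \<le> (1 - t) * \<alpha> + t * \<beta>" by linarith
  have r: "(1 - t) * ((1/2) * \<alpha> + a \<bullet> x) + t * ((1/2) * \<beta> + a \<bullet> y)
      = (1/2) * ((1 - t) * \<alpha> + t * \<beta>) + ((1 - t) * (a \<bullet> x) + t * (a \<bullet> y))"
    by (simp add: field_simps)
  show "(1/2) * (((1 - t) *\<^sub>R x + t *\<^sub>R y) \<bullet> (A *v ((1 - t) *\<^sub>R x + t *\<^sub>R y))) + a \<bullet> ((1 - t) *\<^sub>R x + t *\<^sub>R y)
      \<le> (1 - t) * ((1/2) * (x \<bullet> (A *v x)) + a \<bullet> x) + t * ((1/2) * (y \<bullet> (A *v y)) + a \<bullet> y)"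
    unfolding e2 e3 \<alpha>_def[symmetric] \<beta>_def[symmetric] r by (intro add_right_mono mult_left_mono ineq) simp
qed simp

lemma quad_deriv:
  fixes A :: "real^'n^'n" and a :: "real^'n"
  assumes sA: "transpose A = A"
  shows "((\<lambda>x. (1/2) * (x \<bullet> (A *v x)) + a \<bullet> x) has_derivative (\<lambda>h. (A *v x + a) \<bullet> h)) (at x)"
proof -
  have Ad: "((*v) A has_derivative (*v) A) (at x)"
    by (intro linear_imp_has_derivative matrix_vector_mul_linear)
  have "((\<lambda>x. (1/2) * (x \<bullet> (A *v x)) + a \<bullet> x) has_derivative (\<lambda>h. (1/2) * (x \<bullet> (A *v h) + h \<bullet> (A *v x)) + a \<bullet> h)) (at x)"
    by (intro derivative_intros Ad)
  moreover have "(\<lambda>h. (1/2) * (x \<bullet> (A *v h) + h \<bullet> (A *v x)) + a \<bullet> h) = (\<lambda>h. (A *v x + a) \<bullet> h)"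
  proof
    fix h
    have "x \<bullet> (A *v h) = h \<bullet> (A *v x)" using sym_dot[OF sA] .
    moreover have "(A *v x + a) \<bullet> h = h \<bullet> (A *v x) + a \<bullet> h"
      by (simp only: inner_add_left inner_commute[of "A *v x" h])
    ultimately show "(1/2) * (x \<bullet> (A *v h) + h \<bullet> (A *v x)) + a \<bullet> h = (A *v x + a) \<bullet> h" by simp
  qed
  ultimately show ?thesis by simp
qed

lemma linear_measure_scale:
  fixes f :: "real^'n \<Rightarrow> real^'n"
  assumes "linear f"
  shows "\<exists>c\<ge>0. \<forall>S \<in> lmeasurable. f ` S \<in> lmeasurable \<and> measure lebesgue (f ` S) = c * measure lebesgue S"
proof (rule induct_linear_elementary [OF \<open>linear f\<close>])
  fix f g :: "real^'n \<Rightarrow> real^'n"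
  assume "linear f" and "linear g"
    and f: "\<exists>c\<ge>0. \<forall>S \<in> lmeasurable. f ` S \<in> lmeasurable \<and> measure lebesgue (f ` S) = c * measure lebesgue S"
    and g: "\<exists>c\<ge>0. \<forall>S \<in> lmeasurable. g ` S \<in> lmeasurable \<and> measure lebesgue (g ` S) = c * measure lebesgue S"
  from f obtain cf where cf: "cf \<ge> 0" "\<forall>S \<in> lmeasurable. f ` S \<in> lmeasurable \<and> measure lebesgue (f ` S) = cf * measure lebesgue S" by blast
  from g obtain cg where cg: "cg \<ge> 0" "\<forall>S \<in> lmeasurable. g ` S \<in> lmeasurable \<and> measure lebesgue (g ` S) = cg * measure lebesgue S" by blast
  show "\<exists>c\<ge>0. \<forall>S \<in> lmeasurable. (f \<circ> g) ` S \<in> lmeasurable \<and> measure lebesgue ((f \<circ> g) ` S) = c * measure lebesgue S"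
  proof (intro exI[of _ "cf * cg"] conjI ballI)
    fix S :: "(real^'n) set" assume S: "S \<in> lmeasurable"
    have gS: "g ` S \<in> lmeasurable" "measure lebesgue (g ` S) = cg * measure lebesgue S" using cg S by auto
    have eq: "(f \<circ> g) ` S = f ` (g ` S)" by (rule image_comp[symmetric])
    have fgS: "f ` (g ` S) \<in> lmeasurable \<and> measure lebesgue (f ` (g ` S)) = cf * measure lebesgue (g ` S)"
      using cf(2) gS(1) by (rule bspec)
    show "(f \<circ> g) ` S \<in> lmeasurable" unfolding eq using fgS by (rule conjunct1)
    show "measure lebesgue ((f \<circ> g) ` S) = cf * cg * measure lebesgue S" unfolding eq using fgS gS(2) by simp
  qed (use cf cg in simp)
next
  fix f :: "real^'n \<Rightarrow> real^'n" and i
  assume "linear f" and 0: "\<And>x. f x $ i = 0"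
  then have "\<not> inj f"
    by (metis (full_types) linear_injective_imp_surjective one_neq_zero surjE vec_component)
  show "\<exists>c\<ge>0. \<forall>S \<in> lmeasurable. f ` S \<in> lmeasurable \<and> measure lebesgue (f ` S) = c * measure lebesgue S"
  proof (intro exI[of _ 0] conjI ballI)
    fix S :: "(real^'n) set" assume "S \<in> lmeasurable"
    show "f ` S \<in> lmeasurable"
      using lmeasurable_iff_indicator_has_integral \<open>linear f\<close> \<open>\<not> inj f\<close> negligible_UNIV negligible_linear_singular_image by blast
    show "measure lebesgue (f ` S) = 0 * measure lebesgue S"
      by (simp add: \<open>\<not> inj f\<close> \<open>linear f\<close> negligible_imp_measure0 negligible_linear_singular_image)
  qed simp
next
  fix c :: "'n \<Rightarrow> real"
  show "\<exists>d\<ge>0. \<forall>S \<in> lmeasurable. (\<lambda>a. \<chi> i. c i * a $ i) ` S \<in> lmeasurable \<and> measure lebesgue ((\<lambda>a. \<chi> i. c i * a $ i) ` S) = d * measure lebesgue S"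
    by (rule exI[of _ "\<bar>prod c UNIV\<bar>"]) (simp add: measurable_stretch measure_stretch)
next
  fix m :: "'n" and n :: "'n"
  assume "m \<noteq> n"
  let ?h = "\<lambda>v::(real, 'n) vec. \<chi> i. v $ Transposition.transpose m n i"
  have lin: "linear ?h"
    by (rule linearI) (simp_all add: plus_vec_def scaleR_vec_def)
  have meq: "measure lebesgue (?h ` cbox a b) = 1 * measure lebesgue (cbox a b)" for a b
  proof (cases "cbox a b = {}")
    case True then show ?thesis
      by simp
  next
    case False
    then have him: "?h ` (cbox a b) \<noteq> {}"
      by blast
    have eq: "?h ` (cbox a b) = cbox (?h a) (?h b)"
      by (auto simp: image_iff lambda_swap_Galois mem_box_cart) (metis transpose_involutory)+
    show ?thesis
      using him prod.permute [OF permutes_swap_id, where S=UNIV and g="\<lambda>i. (b - a)$i", symmetric]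
      by (simp add: eq content_cbox_cart False)
  qed
  show "\<exists>c\<ge>0. \<forall>S \<in> lmeasurable. ?h ` S \<in> lmeasurable \<and> measure lebesgue (?h ` S) = c * measure lebesgue S"
  proof (intro exI[of _ 1] conjI ballI)
    fix S :: "(real^'n) set" assume "S \<in> lmeasurable"
    from measure_linear_sufficient[OF lin this meq]
    show "?h ` S \<in> lmeasurable" "measure lebesgue (?h ` S) = 1 * measure lebesgue S" by simp_all
  qed simp
next
  fix m n :: "'n"
  assume "m \<noteq> n"
  let ?h = "\<lambda>v::(real, 'n) vec. \<chi> i. if i = m then v $ m + v $ n else v $ i"
  have lin: "linear ?h"
    by (rule linearI) (auto simp: algebra_simps plus_vec_def scaleR_vec_def vec_eq_iff)
  have meq: "measure lebesgue (?h ` (cbox a b)) = 1 * measure lebesgue (cbox a b)" for a b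
  proof (cases "cbox a b = {}")
    case True then show ?thesis by simp
  next
    case False
    then have ne: "(+) (\<chi> i. if i = n then - a $ n else 0) ` cbox a b \<noteq> {}"
      by auto
    let ?v = "\<chi> i. if i = n then - a $ n else 0"
    have "?h ` cbox a b
          = (+) (\<chi> i. if i = m \<or> i = n then a $ n else 0) ` ?h ` (+) ?v ` (cbox a b)"
      using \<open>m \<noteq> n\<close> unfolding image_comp o_def by (force simp: vec_eq_iff)
    then have "measure lebesgue (?h ` (cbox a b))
             = measure lebesgue ((\<lambda>v. \<chi> i. if i = m then v $ m + v $ n else v $ i) `
                                 (+) ?v ` cbox a b)"
      by (rule ssubst) (rule measure_translation)
    also have "\<dots> = measure lebesgue ((\<lambda>v. \<chi> i. if i = m then v $ m + v $ n else v $ i) ` cbox (?v +a) (?v + b))"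
      by (metis (no_types, lifting) cbox_translation)
    also have "\<dots> = measure lebesgue ((+) ?v ` cbox a b)"
      apply (subst measure_shear_interval)
      using \<open>m \<noteq> n\<close> ne apply auto
      apply (simp add: cbox_translation)
      by (metis cbox_borel cbox_translation measure_completion sets_lborel)
    also have "\<dots> = measure lebesgue (cbox a b)"
      by (rule measure_translation)
    finally show ?thesis by simp
  qed
  show "\<exists>c\<ge>0. \<forall>S \<in> lmeasurable. ?h ` S \<in> lmeasurable \<and> measure lebesgue (?h ` S) = c * measure lebesgue S"
  proof (intro exI[of _ 1] conjI ballI)
    fix S :: "(real^'n) set" assume "S \<in> lmeasurable"
    from measure_linear_sufficient[OF lin this meq]
    show "?h ` S \<in> lmeasurable" "measure lebesgue (?h ` S) = 1 * measure lebesgue S" by simp_all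
  qed simp
qed

lemma lborel_affine_pushforward:
  fixes L Li :: "real^'n \<Rightarrow> real^'n" and a :: "real^'n"
  assumes lin: "linear L" "linear Li" and inv: "\<And>x. Li (L x) = x" "\<And>x. L (Li x) = x"
  shows "\<exists>k>0. lborel = density (distr lborel borel (\<lambda>x. L x + a)) (\<lambda>_. ennreal k)"
proof -
  obtain c where c: "c \<ge> 0" "\<forall>S \<in> lmeasurable. Li ` S \<in> lmeasurable \<and> measure lebesgue (Li ` S) = c * measure lebesgue S"
    using linear_measure_scale[OF lin(2)] by blast
  obtain cL where cL: "cL \<ge> 0" "\<forall>S \<in> lmeasurable. L ` S \<in> lmeasurable \<and> measure lebesgue (L ` S) = cL * measure lebesgue S"
    using linear_measure_scale[OF lin(1)] by blast
  let ?U = "cbox 0 (One::real^'n)"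
  have U1: "measure lebesgue ?U = 1"
    by (metis cbox_borel content_unit measure_completion sets_lborel)
  have LU: "Li ` ?U \<in> lmeasurable" "measure lebesgue (Li ` ?U) = c" using c U1 by auto
  have "L ` (Li ` ?U) = ?U" using inv by (force simp: image_iff)
  then have "1 = cL * c" using cL(2) LU U1 by (metis mult.right_neutral)
  then have cpos: "c > 0" using c(1) by (cases "c = 0") auto
  define k where "k = 1 / c"
  have kpos: "k > 0" using cpos by (simp add: k_def)
  let ?T = "\<lambda>x. L x + a"
  have contT: "continuous_on UNIV ?T"
    by (intro continuous_intros linear_continuous_on linear_conv_bounded_linear[THEN iffD1] lin)
  then have Tm: "?T \<in> borel_measurable borel" by (rule borel_measurable_continuous_onI)
  have "lborel = density (distr lborel borel ?T) (\<lambda>_. ennreal k)"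
  proof (rule lborel_eqI)
    fix l u :: "real^'n" assume le: "\<And>b. b \<in> Basis \<Longrightarrow> l \<bullet> b \<le> u \<bullet> b"
    let ?B = "box l u"
    have pre: "?T -` ?B = Li ` ((+) (-a) ` ?B)"
    proof (intro set_eqI iffI)
      fix x assume "x \<in> ?T -` ?B"
      then have "L x + a \<in> ?B" by simp
      moreover have "x = Li ((-a) + (L x + a))" using inv by simp
      ultimately show "x \<in> Li ` ((+) (-a) ` ?B)" by blast
    next
      fix x assume "x \<in> Li ` ((+) (-a) ` ?B)"
      then obtain y where "y \<in> ?B" "x = Li ((-a) + y)" by blast
      then show "x \<in> ?T -` ?B" using inv by simp
    qed
    have Bm: "?B \<in> lmeasurable" by (simp add: lmeasurable_open)
    then have Bm': "(+) (-a) ` ?B \<in> lmeasurable" by (rule measurable_translation)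
    have meas: "measure lebesgue (?T -` ?B) = c * (\<Prod>b\<in>Basis. (u - l) \<bullet> b)"
    proof -
      have "measure lebesgue (?T -` ?B) = c * measure lebesgue ((+) (-a) ` ?B)"
        unfolding pre using c(2) Bm' by blast
      also have "\<dots> = c * measure lebesgue ?B" by (simp only: measure_translation)
      also have "measure lebesgue ?B = measure lborel ?B" by simp
      finally show ?thesis using le by (simp add: measure_lborel_box_eq)
    qed
    have Pm: "?T -` ?B \<in> sets lborel" using Tm by (simp add: measurable_sets_borel)
    have bnd: "bounded (?T -` ?B)"
      unfolding pre by (intro bounded_linear_image bounded_translation bounded_box) (simp add: lin linear_conv_bounded_linear[symmetric])
    have fin: "emeasure lborel (?T -` ?B) \<noteq> \<infinity>"
      using emeasure_bounded_finite[OF bnd] by simp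
    have "emeasure lborel (?T -` ?B) = ennreal (measure lborel (?T -` ?B))"
      using fin by (simp add: emeasure_eq_ennreal_measure)
    also have "measure lborel (?T -` ?B) = measure lebesgue (?T -` ?B)" using Pm by simp
    finally have em: "emeasure lborel (?T -` ?B) = ennreal (c * (\<Prod>b\<in>Basis. (u - l) \<bullet> b))"
      using meas by simp
    have P0: "(\<Prod>b\<in>Basis. (u - l) \<bullet> b) \<ge> 0" using le by (auto intro!: prod_nonneg simp: inner_diff_left)
    have e1: "emeasure (density (distr lborel borel ?T) (\<lambda>_. ennreal k)) ?B = ennreal k * emeasure (distr lborel borel ?T) ?B"
      by (subst emeasure_density) (auto simp: nn_integral_cmult_indicator)
    have e2: "emeasure (distr lborel borel ?T) ?B = emeasure lborel (?T -` ?B)"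
      using Tm by (subst emeasure_distr) auto
    have e3: "ennreal k * ennreal (c * (\<Prod>b\<in>Basis. (u - l) \<bullet> b)) = ennreal (\<Prod>b\<in>Basis. (u - l) \<bullet> b)"
      using kpos cpos P0 by (simp add: ennreal_mult[symmetric] k_def)
    show "emeasure (density (distr lborel borel ?T) (\<lambda>_. ennreal k)) ?B = (\<Prod>b\<in>Basis. (u - l) \<bullet> b)"
      using e1 e2 e3 em by simp
  qed simp
  then show ?thesis using kpos by blast
qed

lemma distr_density_affine:
  fixes A :: "real^'n^'n" and a :: "real^'n"
  assumes inv: "invertible A"
  shows "\<exists>k>0. \<forall>f. f \<in> borel_measurable borel \<longrightarrow> (\<forall>x. f x \<ge> 0) \<longrightarrow>
     distr (density lborel (\<lambda>x. ennreal (f x))) lborel (\<lambda>x. A *v x + a)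
       = density lborel (\<lambda>y. ennreal (f (matrix_inv A *v (y - a)) / k))"
proof -
  let ?Ai = "matrix_inv A"
  have AAi: "A ** ?Ai = mat 1" "?Ai ** A = mat 1" using invertible_matrix_inv[OF inv] by auto
  have i1: "?Ai *v (A *v x) = x" for x using AAi by (simp add: matrix_vector_mul_assoc)
  have i2: "A *v (?Ai *v x) = x" for x using AAi by (simp add: matrix_vector_mul_assoc)
  obtain k where k: "k > 0" and lb: "lborel = density (distr lborel borel (\<lambda>x. A *v x + a)) (\<lambda>_. ennreal k)"
    using lborel_affine_pushforward[of "(*v) A" "(*v) ?Ai" a] i1 i2
    by (auto simp: matrix_vector_mul_linear)
  let ?T = "\<lambda>x. A *v x + a"
  have contT: "continuous_on UNIV ?T"
    by (intro continuous_intros linear_continuous_on linear_conv_bounded_linear[THEN iffD1] matrix_vector_mul_linear)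
  then have Tm: "?T \<in> borel_measurable borel" by (rule borel_measurable_continuous_onI)
  have Tm': "?T \<in> borel_measurable lborel" using Tm by simp
  have nnT: "(\<integral>\<^sup>+ y. h y \<partial>lborel) = (\<integral>\<^sup>+ x. ennreal k * h (?T x) \<partial>lborel)"
    if hm: "h \<in> borel_measurable borel" for h :: "real^'n \<Rightarrow> ennreal"
  proof -
    have "(\<integral>\<^sup>+ y. h y \<partial>lborel) = (\<integral>\<^sup>+ y. h y \<partial>density (distr lborel borel ?T) (\<lambda>_. ennreal k))"
      by (subst lb) simp
    also have "\<dots> = (\<integral>\<^sup>+ y. ennreal k * h y \<partial>distr lborel borel ?T)"
      using hm by (subst nn_integral_density) auto
    also have "\<dots> = (\<integral>\<^sup>+ x. ennreal k * h (?T x) \<partial>lborel)"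
      using hm Tm' by (subst nn_integral_distr) auto
    finally show ?thesis .
  qed
  show ?thesis
  proof (intro exI[of _ k] conjI allI impI k)
    fix f :: "real^'n \<Rightarrow> real" assume fm: "f \<in> borel_measurable borel" and f0: "\<forall>x. f x \<ge> 0"
    let ?G = "\<lambda>y. ennreal (f (?Ai *v (y - a)) / k)"
    have cAi: "continuous_on UNIV ((*v) ?Ai)"
      by (intro linear_continuous_on linear_conv_bounded_linear[THEN iffD1] matrix_vector_mul_linear)
    have "continuous_on UNIV (\<lambda>y. ?Ai *v (y - a))"
      using continuous_on_compose2[OF cAi continuous_on_diff[OF continuous_on_id continuous_on_const]] by auto
    then have Sm: "(\<lambda>y. ?Ai *v (y - a)) \<in> borel_measurable borel"
      by (rule borel_measurable_continuous_onI)
    have Gm: "?G \<in> borel_measurable borel"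
      using measurable_comp[OF Sm fm] by (auto simp: o_def)
    show "distr (density lborel (\<lambda>x. ennreal (f x))) lborel ?T = density lborel ?G"
    proof (rule measure_eqI)
      show "sets (distr (density lborel (\<lambda>x. ennreal (f x))) lborel ?T) = sets (density lborel ?G)" by simp
      fix B assume "B \<in> sets (distr (density lborel (\<lambda>x. ennreal (f x))) lborel ?T)"
      then have B: "B \<in> sets borel" by simp
      have "emeasure (density lborel ?G) B = (\<integral>\<^sup>+ y. ?G y * indicator B y \<partial>lborel)"
        using B Gm by (subst emeasure_density) auto
      also have "\<dots> = (\<integral>\<^sup>+ x. ennreal k * (?G (?T x) * indicator B (?T x)) \<partial>lborel)"
        using B Gm by (intro nnT) auto
      also have "\<dots> = (\<integral>\<^sup>+ x. ennreal (f x) * indicator (?T -` B) x \<partial>lborel)"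
      proof (rule nn_integral_cong)
        fix x
        have "ennreal k * ?G (?T x) = ennreal (f x)"
          using k f0 i1 by (simp add: ennreal_mult[symmetric])
        then show "ennreal k * (?G (?T x) * indicator B (?T x)) = ennreal (f x) * indicator (?T -` B) x"
          by (simp add: mult.assoc[symmetric] indicator_def)
      qed
      also have "\<dots> = emeasure (distr (density lborel (\<lambda>x. ennreal (f x))) lborel ?T) B"
        using B Tm' fm by (simp add: emeasure_distr emeasure_density measurable_sets_borel[OF Tm])
      finally show "emeasure (distr (density lborel (\<lambda>x. ennreal (f x))) lborel ?T) B = emeasure (density lborel ?G) B" by simp
    qed
  qed
qed

lemma exp_div_eq:
  fixes u v c1 c2 :: real
  assumes "c1 > 0" "c2 > 0" "exp u / c1 = exp v / c2"
  shows "u - v = ln c1 - ln c2"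
proof -
  have "exp u * c2 = exp v * c1" using assms by (simp add: field_simps)
  then have "ln (exp u * c2) = ln (exp v * c1)" by simp
  then have "u + ln c2 = v + ln c1" using assms by (simp add: ln_mult)
  then show ?thesis by simp
qed

theorem proposition3p12:
  fixes \<Omega>0 \<Omega>1 :: "(real^'n) set" and \<Sigma>0 \<Sigma>1 :: "real^'n^'n" and m0 m1 :: "real^'n"
  assumes "lipschitz_domain \<Omega>0" "bounded \<Omega>0" "interior \<Omega>0 \<noteq> {}"
    and "lipschitz_domain \<Omega>1" "bounded \<Omega>1" "interior \<Omega>1 \<noteq> {}"
    and "sym_posdef \<Sigma>0" "sym_posdef \<Sigma>1"
  shows "\<forall>(A::real^'n^'n) (a::real^'n). sym_posdef A \<longrightarrow>
     (monge_map (trunc_gauss \<Omega>0 m0 \<Sigma>0) (trunc_gauss \<Omega>1 m1 \<Sigma>1) (\<lambda>x. A *v x + a)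
      \<longleftrightarrow>
      ((\<Omega>1 - (\<lambda>x. A *v x + a) ` \<Omega>0) \<union> ((\<lambda>x. A *v x + a) ` \<Omega>0 - \<Omega>1) \<in> null_sets lborel
       \<and> m1 = A *v m0 + a \<and> \<Sigma>1 = A ** \<Sigma>0 ** A))"
proof (intro allI impI)
  fix A :: "real^'n^'n" and a :: "real^'n"
  assume sA: "sym_posdef A"
  have o0: "open \<Omega>0" "\<Omega>0 \<noteq> {}" using assms(1) unfolding lipschitz_domain_def by auto
  have o1: "open \<Omega>1" "\<Omega>1 \<noteq> {}" using assms(4) unfolding lipschitz_domain_def by auto
  have symA: "transpose A = A" using sA by (simp add: sym_posdef_def)
  have invA: "invertible A" by (rule posdef_invertible[OF sA])
  have inv0: "invertible \<Sigma>0" by (rule posdef_invertible[OF assms(7)])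
  have inv1: "invertible \<Sigma>1" by (rule posdef_invertible[OF assms(8)])
  have sym0: "transpose \<Sigma>0 = \<Sigma>0" using assms(7) by (simp add: sym_posdef_def)
  have sym1: "transpose \<Sigma>1 = \<Sigma>1" using assms(8) by (simp add: sym_posdef_def)
  define T where "T = (\<lambda>x. A *v x + a)"
  define Ai where "Ai = matrix_inv A"
  define m' where "m' = A *v m0 + a"
  define \<Sigma>' where "\<Sigma>' = A ** \<Sigma>0 ** A"
  define Z0 where "Z0 = gauss_const \<Omega>0 m0 \<Sigma>0"
  define Z1 where "Z1 = gauss_const \<Omega>1 m1 \<Sigma>1"
  define \<mu> where "\<mu> = trunc_gauss \<Omega>0 m0 \<Sigma>0"
  define \<nu> where "\<nu> = trunc_gauss \<Omega>1 m1 \<Sigma>1"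
  have Z0pos: "Z0 > 0" unfolding Z0_def using gauss_norm(1)[OF o0(1) assms(2) o0(2) assms(7)] .
  have Z1pos: "Z1 > 0" unfolding Z1_def using gauss_norm(1)[OF o1(1) assms(5) o1(2) assms(8)] .
  have i1: "Ai *v (A *v x) = x" for x
    using invertible_matrix_inv[OF invA] by (simp add: Ai_def matrix_vector_mul_assoc)
  have i2: "A *v (Ai *v y) = y" for y
    using invertible_matrix_inv[OF invA] by (simp add: Ai_def matrix_vector_mul_assoc)
  have TS: "T (Ai *v (y - a)) = y" for y by (simp add: T_def i2)
  have ST: "Ai *v (T x - a) = x" for x by (simp add: T_def i1)
  have TO: "T ` \<Omega>0 = (\<lambda>y. Ai *v (y - a)) -` \<Omega>0"
  proof (intro set_eqI iffI)
    fix y assume "y \<in> T ` \<Omega>0"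
    then obtain x where "x \<in> \<Omega>0" "y = T x" by blast
    then show "y \<in> (\<lambda>y. Ai *v (y - a)) -` \<Omega>0" using ST by simp
  next
    fix y assume "y \<in> (\<lambda>y. Ai *v (y - a)) -` \<Omega>0"
    then have "Ai *v (y - a) \<in> \<Omega>0" by simp
    then show "y \<in> T ` \<Omega>0" using TS[of y] by (metis image_eqI)
  qed
  have openTO: "open (T ` \<Omega>0)"
    using continuous_on_mv[of Ai a] o0(1) continuous_on_open_vimage[OF open_UNIV] unfolding TO by auto
  have contT: "continuous_on UNIV T"
    unfolding T_def by (intro continuous_intros linear_continuous_on linear_conv_bounded_linear[THEN iffD1] matrix_vector_mul_linear)
  then have Tm: "T \<in> borel_measurable borel" by (rule borel_measurable_continuous_onI)
  have Tmu: "T \<in> borel_measurable \<mu>" using Tm unfolding \<mu>_def trunc_gauss_def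
    by (simp add: measurable_cong_sets[OF sets_density refl])
  obtain k where k: "k > 0" and PF: "\<And>f. f \<in> borel_measurable borel \<Longrightarrow> (\<forall>x. f x \<ge> 0) \<Longrightarrow>
     distr (density lborel (\<lambda>x. ennreal (f x))) lborel (\<lambda>x. A *v x + a)
       = density lborel (\<lambda>y. ennreal (f (matrix_inv A *v (y - a)) / k))"
    using distr_density_affine[OF invA, of a] by blast
  have gm0: "gauss_weight m0 \<Sigma>0 \<in> borel_measurable borel"
    by (rule borel_measurable_continuous_onI[OF gauss_weight_continuous])
  have gm': "gauss_weight m' \<Sigma>' \<in> borel_measurable borel"
    by (rule borel_measurable_continuous_onI[OF gauss_weight_continuous])
  have gm1: "gauss_weight m1 \<Sigma>1 \<in> borel_measurable borel"
    by (rule borel_measurable_continuous_onI[OF gauss_weight_continuous])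
  have O0m: "\<Omega>0 \<in> sets borel" using o0(1) by simp
  have O1m: "\<Omega>1 \<in> sets borel" using o1(1) by simp
  have TOm: "T ` \<Omega>0 \<in> sets borel" using openTO by simp
  define f0 where "f0 = (\<lambda>x. indicator \<Omega>0 x * gauss_weight m0 \<Sigma>0 x / Z0)"
  have f0m: "f0 \<in> borel_measurable borel" unfolding f0_def using gm0 O0m by measurable
  have f0nn: "\<forall>x. f0 x \<ge> 0" unfolding f0_def using Z0pos gauss_weight_pos[of m0 \<Sigma>0] by (simp add: less_imp_le)
  have mu: "\<mu> = density lborel (\<lambda>x. ennreal (f0 x))" by (simp add: \<mu>_def trunc_gauss_def f0_def Z0_def)
  have nu: "\<nu> = density lborel (\<lambda>y. ennreal (indicator \<Omega>1 y * gauss_weight m1 \<Sigma>1 y / Z1))"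
    by (simp add: \<nu>_def trunc_gauss_def Z1_def)
  have gw: "gauss_weight m0 \<Sigma>0 (Ai *v (y - a)) = gauss_weight m' \<Sigma>' y" for y
    unfolding Ai_def m'_def \<Sigma>'_def by (rule gauss_weight_affine[OF invA symA inv0])
  have indT: "indicator \<Omega>0 (Ai *v (y - a)) = (indicator (T ` \<Omega>0) y :: real)" for y
    unfolding TO by (simp add: indicator_def)
  define G' where "G' = (\<lambda>y. indicator (T ` \<Omega>0) y * gauss_weight m' \<Sigma>' y / Z0 / k)"
  define G1 where "G1 = (\<lambda>y. indicator \<Omega>1 y * gauss_weight m1 \<Sigma>1 y / Z1)"
  have D: "distr \<mu> lborel T = density lborel (\<lambda>y. ennreal (G' y))"
  proof -
    have "distr \<mu> lborel T = density lborel (\<lambda>y. ennreal (f0 (matrix_inv A *v (y - a)) / k))"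
      unfolding mu T_def using PF[OF f0m f0nn] .
    also have "(\<lambda>y. ennreal (f0 (matrix_inv A *v (y - a)) / k)) = (\<lambda>y. ennreal (G' y))"
      by (rule ext) (simp add: f0_def G'_def gw indT Ai_def[symmetric])
    finally show ?thesis .
  qed
  have G'm: "G' \<in> borel_measurable borel" unfolding G'_def using gm' TOm by measurable
  have G1m: "G1 \<in> borel_measurable borel" unfolding G1_def using gm1 O1m by measurable
  have G'nn: "G' y \<ge> 0" for y unfolding G'_def using Z0pos k gauss_weight_pos[of m' \<Sigma>' y] by (simp add: indicator_def)
  have G1nn: "G1 y \<ge> 0" for y unfolding G1_def using Z1pos gauss_weight_pos[of m1 \<Sigma>1 y] by (simp add: indicator_def)
  have G'pos: "y \<in> T ` \<Omega>0 \<Longrightarrow> G' y > 0" for y unfolding G'_def using Z0pos k gauss_weight_pos[of m' \<Sigma>' y] by simp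
  have G'0: "y \<notin> T ` \<Omega>0 \<Longrightarrow> G' y = 0" for y unfolding G'_def by simp
  have G1pos: "y \<in> \<Omega>1 \<Longrightarrow> G1 y > 0" for y unfolding G1_def using Z1pos gauss_weight_pos[of m1 \<Sigma>1 y] by simp
  have G10: "y \<notin> \<Omega>1 \<Longrightarrow> G1 y = 0" for y unfolding G1_def by simp
  let ?SD = "(\<Omega>1 - T ` \<Omega>0) \<union> (T ` \<Omega>0 - \<Omega>1)"
  have SDm: "?SD \<in> sets lborel" using O1m TOm by auto
  have phi: "\<exists>\<phi>::real^'n \<Rightarrow> real. convex_on UNIV \<phi> \<and> (AE x in \<mu>. (\<phi> has_derivative (\<lambda>h. T x \<bullet> h)) (at x))"
  proof (intro exI[of _ "\<lambda>x. (1/2) * (x \<bullet> (A *v x)) + a \<bullet> x"] conjI)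
    show "convex_on UNIV (\<lambda>x. (1/2) * (x \<bullet> (A *v x)) + a \<bullet> x)" by (rule quad_convex[OF sA])
    show "AE x in \<mu>. ((\<lambda>x. (1/2) * (x \<bullet> (A *v x)) + a \<bullet> x) has_derivative (\<lambda>h. T x \<bullet> h)) (at x)"
      unfolding T_def by (intro AE_I2 quad_deriv[OF symA])
  qed
  have main: "monge_map \<mu> \<nu> T \<longleftrightarrow> (?SD \<in> null_sets lborel \<and> m1 = m' \<and> \<Sigma>1 = \<Sigma>')"
  proof
    assume mm: "monge_map \<mu> \<nu> T"
    then have "density lborel (\<lambda>y. ennreal (G' y)) = density lborel (\<lambda>y. ennreal (G1 y))"
      using D nu unfolding monge_map_def G1_def by simp
    then have "AE y in lborel. ennreal (G' y) = ennreal (G1 y)"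
      using G'm G1m by (intro sigma_finite_measure.density_unique[OF sigma_finite_lborel]) auto
    then have AE': "AE y in lborel. G' y = G1 y"
      by (rule eventually_mono) (simp add: G'nn G1nn)
    then obtain N where N0: "{y \<in> space lborel. \<not> G' y = G1 y} \<subseteq> N" "emeasure lborel N = 0" "N \<in> sets lborel"
      by (rule AE_E)
    then have Nnull: "N \<in> null_sets lborel" by auto
    have SDsub: "?SD \<subseteq> N"
    proof
      fix y assume y: "y \<in> ?SD"
      have "G' y \<noteq> G1 y"
      proof (cases "y \<in> \<Omega>1")
        case True
        then have "y \<notin> T ` \<Omega>0" using y by auto
        then show ?thesis using G1pos[OF True] G'0 by simp
      next
        case False
        then have "y \<in> T ` \<Omega>0" using y by auto
        then show ?thesis using G'pos G10[OF False] by force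
      qed
      then show "y \<in> N" using N0(1) by auto
    qed
    have SDnull: "?SD \<in> null_sets lborel" by (rule null_sets_subset[OF Nnull SDm SDsub])
    define U where "U = \<Omega>1 \<inter> T ` \<Omega>0"
    have openU: "open U" unfolding U_def using o1(1) openTO by auto
    have Une: "U \<noteq> {}"
    proof
      assume "U = {}"
      then have "\<Omega>1 \<subseteq> ?SD" unfolding U_def by auto
      then have "\<Omega>1 \<in> null_sets lborel" using null_sets_subset[OF SDnull] O1m by auto
      then have "emeasure lborel \<Omega>1 = 0" by (rule null_setsD1)
      then show False using open_nonempty_pos[OF o1] by simp
    qed
    then obtain y0 where y0: "y0 \<in> U" by blast
    obtain r where r: "r > 0" "ball y0 r \<subseteq> U" using openU y0 openE by blast
    define C where "C = {y. gauss_weight m' \<Sigma>' y / Z0 / k = gauss_weight m1 \<Sigma>1 y / Z1}"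
    have closedC: "closed C" unfolding C_def
      using Z0pos k Z1pos by (intro closed_Collect_eq continuous_intros gauss_weight_continuous) auto
    have AEU: "AE y in lebesgue. y \<in> U \<longrightarrow> y \<in> C"
    proof -
      have "AE y in lebesgue. G' y = G1 y" using AE' by (rule AE_completion)
      then show ?thesis
      proof (rule eventually_mono)
        fix y assume "G' y = G1 y"
        then show "y \<in> U \<longrightarrow> y \<in> C" by (auto simp: U_def C_def G'_def G1_def)
      qed
    qed
    have onU: "y \<in> U \<Longrightarrow> y \<in> C" for y
      using mem_closed_if_AE_lebesgue_open[OF openU closedC AEU] .
    define P1 where "P1 = matrix_inv \<Sigma>1"
    define P' where "P' = matrix_inv \<Sigma>'"
    have sym': "transpose \<Sigma>' = \<Sigma>'" unfolding \<Sigma>'_def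
      by (simp add: matrix_transpose_mul symA sym0 matrix_mul_assoc)
    have inv': "invertible \<Sigma>'" unfolding \<Sigma>'_def by (intro invertible_mult invA inv0)
    have sP1: "transpose P1 = P1" unfolding P1_def by (rule transpose_matrix_inv_sym[OF sym1 inv1])
    have sP': "transpose P' = P'" unfolding P'_def by (rule transpose_matrix_inv_sym[OF sym' inv'])
    have quad: "(y - m1) \<bullet> (P1 *v (y - m1)) - (y - m') \<bullet> (P' *v (y - m')) = 2 * (ln (Z0 * k) - ln Z1)"
      if y: "y \<in> ball y0 r" for y
    proof -
      have "y \<in> C" using onU r(2) y by auto
      then have "exp (- (1/2) * ((y - m') \<bullet> (P' *v (y - m')))) / (Z0 * k) = exp (- (1/2) * ((y - m1) \<bullet> (P1 *v (y - m1)))) / Z1"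
        unfolding C_def gauss_weight_def P'_def P1_def by (simp add: divide_divide_eq_left)
      from exp_div_eq[OF _ Z1pos this] Z0pos k
      have "- (1/2) * ((y - m') \<bullet> (P' *v (y - m'))) - (- (1/2) * ((y - m1) \<bullet> (P1 *v (y - m1)))) = ln (Z0 * k) - ln Z1"
        by simp
      then show ?thesis by simp
    qed
    have qi: "P1 = P' \<and> P1 *v (y0 - m1) = P' *v (y0 - m')"
      using quad_ident[OF sP1 sP' r(1) quad] by blast
    have S1P1: "\<Sigma>1 ** P1 = mat 1" unfolding P1_def using invertible_matrix_inv(1)[OF inv1] .
    have S'P': "\<Sigma>' ** P' = mat 1" unfolding P'_def using invertible_matrix_inv(1)[OF inv'] .
    have "y0 - m1 = y0 - m'"
    proof -
      have qi1: "P1 = P'" and qi2: "P1 *v (y0 - m1) = P' *v (y0 - m')" using qi by auto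
      have e2: "P1 *v (y0 - m1) = P1 *v (y0 - m')" using qi2 unfolding qi1 .
      have "\<Sigma>1 *v (P1 *v (y0 - m1)) = \<Sigma>1 *v (P1 *v (y0 - m'))" by (simp only: e2)
      then show ?thesis using S1P1 by (simp add: matrix_vector_mul_assoc)
    qed
    then have mm1: "m1 = m'" by simp
    have "\<Sigma>1 = matrix_inv P1" using matrix_inv_unique[OF S1P1] by simp
    also have "\<dots> = matrix_inv P'" using qi by simp
    also have "\<dots> = \<Sigma>'" using matrix_inv_unique[OF S'P'] by simp
    finally have "\<Sigma>1 = \<Sigma>'" .
    with SDnull mm1 show "?SD \<in> null_sets lborel \<and> m1 = m' \<and> \<Sigma>1 = \<Sigma>'" by simp
  next
    assume H: "?SD \<in> null_sets lborel \<and> m1 = m' \<and> \<Sigma>1 = \<Sigma>'"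
    then have SDnull: "?SD \<in> null_sets lborel" and mm1: "m1 = m'" and SS: "\<Sigma>1 = \<Sigma>'" by auto
    define G2 where "G2 = (\<lambda>y. indicator \<Omega>1 y * gauss_weight m1 \<Sigma>1 y / Z0 / k)"
    have G2m: "G2 \<in> borel_measurable borel" unfolding G2_def using gm1 O1m by measurable
    have D2: "distr \<mu> lborel T = density lborel (\<lambda>y. ennreal (G2 y))"
    proof -
      have "density lborel (\<lambda>y. ennreal (G' y)) = density lborel (\<lambda>y. ennreal (G2 y))"
      proof (rule density_cong)
        show "(\<lambda>y. ennreal (G' y)) \<in> borel_measurable lborel" using G'm by simp
        show "(\<lambda>y. ennreal (G2 y)) \<in> borel_measurable lborel" using G2m by simp
        show "AE y in lborel. ennreal (G' y) = ennreal (G2 y)"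
        proof (rule AE_I'[OF SDnull])
          show "{y \<in> space lborel. \<not> ennreal (G' y) = ennreal (G2 y)} \<subseteq> ?SD"
          proof
            fix y assume y: "y \<in> {y \<in> space lborel. \<not> ennreal (G' y) = ennreal (G2 y)}"
            have "indicator (T ` \<Omega>0) y \<noteq> (indicator \<Omega>1 y :: real)"
            proof
              assume "indicator (T ` \<Omega>0) y = (indicator \<Omega>1 y :: real)"
              then have "G' y = G2 y" unfolding G'_def G2_def using mm1 SS by simp
              then show False using y by simp
            qed
            then show "y \<in> ?SD" by (auto simp: indicator_def split: if_splits)
          qed
        qed
      qed
      with D show ?thesis by simp
    qed
    have mass1: "emeasure (distr \<mu> lborel T) UNIV = 1"
    proof -
      have "emeasure (distr \<mu> lborel T) UNIV = emeasure \<mu> (T -` UNIV \<inter> space \<mu>)"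
        using Tmu by (subst emeasure_distr) auto
      also have "\<dots> = emeasure \<mu> UNIV" by (simp add: mu)
      also have "\<dots> = 1" unfolding \<mu>_def by (rule trunc_gauss_mass[OF o0(1) assms(2) o0(2) assms(7)])
      finally show ?thesis .
    qed
    have mass2: "emeasure (density lborel (\<lambda>y. ennreal (G2 y))) UNIV = ennreal (Z1 / (Z0 * k))"
    proof -
      have hm: "(\<lambda>y. ennreal (indicator \<Omega>1 y * gauss_weight m1 \<Sigma>1 y)) \<in> borel_measurable lborel"
        using gm1 O1m by measurable
      have "emeasure (density lborel (\<lambda>y. ennreal (G2 y))) UNIV = (\<integral>\<^sup>+ y. ennreal (G2 y) \<partial>lborel)"
        using G2m by (subst emeasure_density) auto
      also have "\<dots> = (\<integral>\<^sup>+ y. ennreal (indicator \<Omega>1 y * gauss_weight m1 \<Sigma>1 y) * ennreal (1 / (Z0 * k)) \<partial>lborel)"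
        using Z0pos k gauss_weight_pos[of m1 \<Sigma>1]
        by (intro nn_integral_cong) (simp add: G2_def ennreal_mult[symmetric] less_imp_le divide_divide_eq_left)
      also have "\<dots> = ennreal Z1 * ennreal (1 / (Z0 * k))"
        using hm gauss_norm(2)[OF o1(1) assms(5) o1(2) assms(8)] unfolding Z1_def
        by (subst nn_integral_multc) auto
      also have "\<dots> = ennreal (Z1 / (Z0 * k))" using Z1pos Z0pos k by (simp add: ennreal_mult[symmetric])
      finally show ?thesis .
    qed
    have "ennreal (Z1 / (Z0 * k)) = 1" using mass1 mass2 D2 by (simp del: ennreal_eq_1)
    then have "Z1 / (Z0 * k) = 1" using ennreal_eq_1 by blast
    moreover have "Z0 * k > 0" using Z0pos k by simp
    ultimately have Zk: "Z0 * k = Z1" by (simp add: field_simps)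
    have "G2 = G1"
    proof
      fix y show "G2 y = G1 y" unfolding G2_def G1_def divide_divide_eq_left Zk by (rule refl)
    qed
    then have dist: "distr \<mu> lborel T = \<nu>" using D2 nu unfolding G1_def by simp
    show "monge_map \<mu> \<nu> T" unfolding monge_map_def using Tmu dist phi by blast
  qed
  then show "monge_map (trunc_gauss \<Omega>0 m0 \<Sigma>0) (trunc_gauss \<Omega>1 m1 \<Sigma>1) (\<lambda>x. A *v x + a) \<longleftrightarrow>
      ((\<Omega>1 - (\<lambda>x. A *v x + a) ` \<Omega>0) \<union> ((\<lambda>x. A *v x + a) ` \<Omega>0 - \<Omega>1) \<in> null_sets lborel
       \<and> m1 = A *v m0 + a \<and> \<Sigma>1 = A ** \<Sigma>0 ** A)"
    unfolding \<mu>_def \<nu>_def T_def m'_def \<Sigma>'_def .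
qed

end
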